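(* Assume that for every integer $d\ge5$ and every real $x\ge\frac12\left(d+\sqrt{d+2}\right)$ one has $-\frac{R_d(x)}{P_d(x)}\ge\frac{0.995(d-2)}{2x+d-2}$. Let $s_1\ge1$ and $s_2$ be integers with $s_2>\frac12\left(\sqrt{8s_1+9}-1\right)$, and let $$d_0=\left\lfloor\sqrt{4s_1^2+4s_1+(s_2+\tfrac12)^2}-s_2-\tfrac32\right\rfloor,$$ and suppose $d_0\ge5$. If $$0<\frac{2}{d_0+1}(s_1^2+s_1)-\frac{d_0+2}{2}-s_2\le\frac{0.995(d_0-2)}{2s_1+d_0-2},$$ then the function $f_{s_1,s_2}(N)=\binom{s_2}{N}\sum_i\binom{s_1}{i}\binom{s_1}{N-i}\binom{N}{i}$ attains its maximum over integers $N$ at $N=\left\lfloor 2s_1+s_2+\tfrac32-\sqrt{4s_1^2+4s_1+(s_2+\tfrac12)^2}\right\rfloor+1$.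
   Context: Binomial coefficients $\binom{a}{b}$ are $0$ when $b<0$ or $b>a$. For a nonnegative integer $d$, $P_d(x)=\sum_{i=0}^{d}\frac{(x_i)^2(x_{d-i})^2}{i!\,(d-i)!}$ with $x_i=x(x-1)\cdots(x-i+1)$, and $R_d(x)=P_{d+1}(x)-\left(\frac{2}{d+1}x^2-\frac{2d}{d+1}x+\frac d2\right)P_d(x)$. The first sentence of the claim (the assumed inequality) is the paper's Conjecture 3.1, taken here as a hypothesis. *)

theory Defs
  imports Complex_Main
begin

definition ibinom :: "int \<Rightarrow> int \<Rightarrow> int" where
  "ibinom a b = (if 0 \<le> b \<and> b \<le> a then int (nat a choose nat b) else 0)"

definition ffall :: "real \<Rightarrow> nat \<Rightarrow> real" where
  "ffall x i = (\<Prod>k<i. x - real k)"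

definition Pd :: "nat \<Rightarrow> real \<Rightarrow> real" where
  "Pd d x = (\<Sum>i=0..d. (ffall x i)^2 * (ffall x (d - i))^2 / (fact i * fact (d - i)))"

definition Rd :: "nat \<Rightarrow> real \<Rightarrow> real" where
  "Rd d x = Pd (d + 1) x
     - (2 / (real d + 1) * x^2 - 2 * real d / (real d + 1) * x + real d / 2) * Pd d x"

text \<open>f_{s1,s2}(N); the sum over all integers i is restricted to 0..s1,
  outside of which binom s1 i vanishes.\<close>
definition fs :: "int \<Rightarrow> int \<Rightarrow> int \<Rightarrow> int" where
  "fs s1 s2 N = ibinom s2 N * (\<Sum>i\<in>{0..s1}. ibinom s1 i * ibinom s1 (N - i) * ibinom N i)"

end

theory Submission
  imports Defs
begin


definition tt :: "nat \<Rightarrow> real \<Rightarrow> nat \<Rightarrow> real" where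
  "tt d x i = (ffall x i)^2 * (ffall x (d - i))^2 / (fact i * fact (d - i))"

lemma Pd_tt: "Pd d x = (\<Sum>i=0..d. tt d x i)"
  by (simp add: Pd_def tt_def)

lemma tt_nonneg: "tt d x i \<ge> 0"
  by (simp add: tt_def)

lemma ffall_Suc: "ffall x (Suc k) = ffall x k * (x - real k)"
  by (simp add: ffall_def)

lemma gen_aux: fixes A B c F G k :: real assumes "F > 0" "G > 0" "k > 0"
  shows "A^2*(B*c)^2/(F*(k*G))*k = A^2*B^2/(F*G)*c^2"
proof -
  have "A^2*(B*c)^2/(F*(k*G))*k = (A^2*(B*c)^2 * k)/(k*(F*G))" by (simp add: ac_simps)
  also have "\<dots> = A^2*(B*c)^2/(F*G)" using assms by simp
  finally show ?thesis by (simp add: power_mult_distrib)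
qed

lemma tt_a: assumes "j \<le> d"
  shows "tt (Suc d) x j * real (Suc d - j) = tt d x j * (x - real (d - j))^2"
proof -
  have e: "Suc d - j = Suc (d - j)" using assms by simp
  have f1: "fact j > (0::real)" "fact (d-j) > (0::real)" by auto
  have "tt (Suc d) x j = ffall x j ^2 * (ffall x (d-j) * (x - real(d-j)))^2 / (fact j * (real (Suc (d-j)) * fact (d-j)))"
    unfolding tt_def e ffall_Suc fact_Suc by simp
  also have "\<dots> * real (Suc (d-j)) = ffall x j ^2 * ffall x (d-j)^2 / (fact j * fact (d-j)) * (x - real(d-j))^2"
    by (rule gen_aux) (use f1 in auto)
  finally show ?thesis unfolding tt_def e by simp
qed

lemma tt_b: assumes "j \<le> d"
  shows "tt (Suc d) x (Suc j) * real (Suc j) = tt d x j * (x - real j)^2"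
proof -
  have e: "Suc d - Suc j = d - j" by simp
  have f1: "fact j > (0::real)" "fact (d-j) > (0::real)" by auto
  have "tt (Suc d) x (Suc j) = ffall x (d-j) ^2 * (ffall x j * (x - real j))^2 / (fact (d-j) * (real (Suc j) * fact j))"
    unfolding tt_def e ffall_Suc fact_Suc by (simp add: ac_simps)
  also have "\<dots> * real (Suc j) = ffall x (d-j) ^2 * ffall x j^2 / (fact (d-j) * fact j) * (x - real j)^2"
    by (rule gen_aux) (use f1 in auto)
  finally show ?thesis unfolding tt_def by (simp add: ac_simps)
qed

lemma ffall_zero: "n < k \<Longrightarrow> ffall (real n) k = 0"
  unfolding ffall_def by (rule prod_zero) auto

lemma ffall_pos: "k \<le> n \<Longrightarrow> ffall (real n) k > 0"
  unfolding ffall_def by (rule prod_pos) auto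

lemma tt_zero1: "n < i \<Longrightarrow> tt d (real n) i = 0"
  by (simp add: tt_def ffall_zero)
lemma tt_zero2: "n < d - i \<Longrightarrow> tt d (real n) i = 0"
  by (simp add: tt_def ffall_zero)

lemma Pd_Suc1: "Pd (Suc d) x = (\<Sum>j=0..d. tt (Suc d) x j) + tt (Suc d) x (Suc d)"
  unfolding Pd_tt by (rule sum.atLeast0_atMost_Suc)
lemma Pd_Suc2: "Pd (Suc d) x = tt (Suc d) x 0 + (\<Sum>j=0..d. tt (Suc d) x (Suc j))"
  unfolding Pd_tt by (simp add: sum.atLeast0_atMost_Suc_shift del: sum.cl_ivl_Suc)

lemma titu: fixes a b p q :: real assumes "p > 0" "q > 0"
  shows "(a+b)^2/(p+q) \<le> a^2/p + b^2/q"
proof -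
  have "(a+b)^2 * (p*q) \<le> (a^2*q + b^2*p) * (p+q)"
  proof -
    have "(a^2*q + b^2*p)*(p+q) - (a+b)^2*(p*q) = (a*q - b*p)^2" by (simp add: power2_eq_square algebra_simps)
    thus ?thesis using zero_le_power2[of "a*q-b*p"] by linarith
  qed
  thus ?thesis using assms by (simp add: field_simps)
qed

lemma Pd_LB: "Pd (Suc d) x \<ge> (2*x - real d)^2 / (2*(real d + 2)) * Pd d x"
proof -
  let ?c = "(2*x - real d)^2 / (real d + 2)"
  have pt: "?c * tt d x j \<le> tt (Suc d) x j + tt (Suc d) x (Suc j)" if j: "j \<le> d" for j
  proof -
    have p1: "real (Suc d - j) > 0" using j by simp
    have e1: "tt (Suc d) x j = tt d x j * ((x - real (d - j))^2 / real (Suc d - j))"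
      using tt_a[OF j, of x] p1 by (simp add: field_simps)
    have e2: "tt (Suc d) x (Suc j) = tt d x j * ((x - real j)^2 / real (Suc j))"
      using tt_b[OF j, of x] by (simp add: field_simps)
    have t: "(2*x - real d)^2 / (real d + 2) \<le> (x - real (d - j))^2 / real (Suc d - j) + (x - real j)^2 / real (Suc j)"
    proof -
      have h: "((x - real (d - j)) + (x - real j))^2 / (real (Suc d - j) + real (Suc j))
         \<le> (x - real (d - j))^2 / real (Suc d - j) + (x - real j)^2 / real (Suc j)"
        by (rule titu) (use p1 in auto)
      have e3: "(x - real (d - j)) + (x - real j) = 2*x - real d" using j by (simp add: of_nat_diff)
      have e4: "real (Suc d - j) + real (Suc j) = real d + 2" using j by (simp add: of_nat_diff)
      show ?thesis using h unfolding e3 e4 .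
    qed
    have "?c * tt d x j \<le> tt d x j * ((x - real (d - j))^2 / real (Suc d - j) + (x - real j)^2 / real (Suc j))"
      using mult_left_mono[OF t tt_nonneg[of d x j]] by (simp add: mult.commute)
    also have "\<dots> = tt (Suc d) x j + tt (Suc d) x (Suc j)" using e1 e2 by (simp add: algebra_simps)
    finally show ?thesis .
  qed
  have "?c * Pd d x = (\<Sum>j=0..d. ?c * tt d x j)" by (simp add: Pd_tt sum_distrib_left)
  also have "\<dots> \<le> (\<Sum>j=0..d. tt (Suc d) x j + tt (Suc d) x (Suc j))"
    by (rule sum_mono) (use pt in auto)
  also have "\<dots> = (\<Sum>j=0..d. tt (Suc d) x j) + (\<Sum>j=0..d. tt (Suc d) x (Suc j))"
    by (simp add: sum.distrib)
  also have "\<dots> \<le> 2 * Pd (Suc d) x"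
    using Pd_Suc1[of d x] Pd_Suc2[of d x] tt_nonneg[of "Suc d" x 0] tt_nonneg[of "Suc d" x "Suc d"] by linarith
  finally have "?c * Pd d x \<le> 2 * Pd (Suc d) x" .
  thus ?thesis by (simp add: field_simps)
qed

lemma ratio_bound: fixes t t' a p c e :: real
  assumes "t' * p = t * a^2" "p \<ge> e" "e > 0" "t \<ge> 0" "t = 0 \<or> (0 \<le> a \<and> a \<le> c)"
  shows "t' \<le> t * (c^2/e)"
proof (cases "t = 0")
  case True
  then show ?thesis using assms by simp
next
  case False
  hence a: "0 \<le> a" "a \<le> c" using assms by auto
  have p: "p > 0" using assms by linarith
  have t': "t' = t * (a^2 / p)" using assms(1) p by (simp add: field_simps)
  have "a^2 \<le> c^2" using a by (simp add: power_mono)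
  hence r: "a^2/p \<le> c^2/e" using assms(2,3) by (intro frac_le) auto
  show ?thesis unfolding t' using mult_left_mono[OF r assms(4)] .
qed

lemma Pd_UB: "Pd (Suc d) (real n) \<le> (2*real n - real d + 1)^2 / (real d + 1) * Pd d (real n)"
proof -
  define x where "x = real n"
  define c where "c = (2*x - real d + 1)/2"
  define e where "e = (real d + 1)/2"
  define u where "u j = (if j \<le> d then tt d x j else 0)" for j
  define v where "v j = (if 1 \<le> j then tt d x (j-1) else 0)" for j
  have e0: "e > 0" unfolding e_def by simp
  have u0: "u j \<ge> 0" for j unfolding u_def using tt_nonneg by simp
  have v0: "v j \<ge> 0" for j unfolding v_def using tt_nonneg by simp
  have pt: "tt (Suc d) x j \<le> (c^2/e) * (u j + v j)" if j: "j \<le> Suc d" for j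
  proof (cases "2*j \<le> d+1")
    case True
    hence jd: "j \<le> d" by linarith
    have "tt (Suc d) x j \<le> tt d x j * (c^2/e)"
    proof (rule ratio_bound[OF tt_a[OF jd]])
      show "e \<le> real (Suc d - j)" unfolding e_def using True jd by (simp add: of_nat_diff)
      show "0 < e" by (rule e0)
      show "tt d x j \<ge> 0" by (rule tt_nonneg)
      show "tt d x j = 0 \<or> 0 \<le> x - real (d - j) \<and> x - real (d - j) \<le> c"
      proof (cases "n < d - j")
        case True thus ?thesis unfolding x_def by (simp add: tt_zero2)
      next
        case False
        hence "real (d - j) \<le> real n" by simp
        moreover have "real (d-j) = real d - real j" using jd by (simp add: of_nat_diff)
        moreover have "2 * real j \<le> real d + 1" proof -
          have "real (2*j) \<le> real (d+1)" using True by (simp only: of_nat_le_iff)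
          thus ?thesis by simp
        qed
        ultimately show ?thesis unfolding x_def c_def by simp
      qed
    qed
    moreover have "(c^2/e)*(u j + v j) = tt d x j*(c^2/e) + (c^2/e)*v j" unfolding u_def using jd by (simp add: algebra_simps add_divide_distrib)
    moreover have "(c^2/e)*v j \<ge> 0" using e0 v0[of j] by simp
    ultimately show ?thesis by linarith
  next
    case False
    then obtain i where i: "j = Suc i" by (cases j) auto
    have id: "i \<le> d" using j i by simp
    have i2: "2*i \<ge> d" using False i by simp
    have "tt (Suc d) x (Suc i) \<le> tt d x i * (c^2/e)"
    proof (rule ratio_bound[OF tt_b[OF id]])
      show "e \<le> real (Suc i)" unfolding e_def using i2 by simp
      show "0 < e" by (rule e0)
      show "tt d x i \<ge> 0" by (rule tt_nonneg)
      show "tt d x i = 0 \<or> 0 \<le> x - real i \<and> x - real i \<le> c"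
      proof (cases "n < i")
        case True thus ?thesis unfolding x_def by (simp add: tt_zero1)
      next
        case False
        hence "real i \<le> real n" by simp
        moreover have "2 * real i \<ge> real d" proof -
          have "real d \<le> real (2*i)" using i2 by (simp only: of_nat_le_iff)
          thus ?thesis by simp
        qed
        ultimately show ?thesis unfolding x_def c_def by simp
      qed
    qed
    moreover have "(c^2/e)*(u j + v j) = tt d x i*(c^2/e) + (c^2/e)*u j" unfolding v_def using i by (simp add: algebra_simps add_divide_distrib)
    moreover have "(c^2/e)*u j \<ge> 0" using e0 u0[of j] by simp
    ultimately show ?thesis using i by simp
  qed
  have su: "(\<Sum>j=0..Suc d. u j) = Pd d x"
    unfolding Pd_tt by (simp add: u_def)
  have sv: "(\<Sum>j=0..Suc d. v j) = Pd d x"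
    unfolding Pd_tt by (simp add: v_def sum.atLeast0_atMost_Suc_shift del: sum.cl_ivl_Suc)
  have "Pd (Suc d) x = (\<Sum>j=0..Suc d. tt (Suc d) x j)" by (rule Pd_tt)
  also have "\<dots> \<le> (\<Sum>j=0..Suc d. (c^2/e) * (u j + v j))"
    by (rule sum_mono) (use pt in auto)
  also have "\<dots> = (c^2/e) * ((\<Sum>j=0..Suc d. u j) + (\<Sum>j=0..Suc d. v j))"
    by (simp only: sum.distrib[symmetric] sum_distrib_left)
  also have "\<dots> = (c^2/e) * (2 * Pd d x)" using su sv by simp
  also have "(c^2/e) * (2 * Pd d x) = (2*real n - real d + 1)^2 / (real d + 1) * Pd d x"
    unfolding c_def e_def x_def by (simp add: field_simps power2_eq_square)
  finally show ?thesis unfolding x_def .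
qed

lemma ffall_fact: "k \<le> n \<Longrightarrow> ffall (real n) k = fact n / fact (n - k)"
proof (induction k)
  case 0 thus ?case by (simp add: ffall_def)
next
  case (Suc k)
  have e: "n - k = Suc (n - Suc k)" using Suc.prems by simp
  have "ffall (real n) (Suc k) = fact n / fact (n - k) * (real n - real k)"
    using Suc by (simp add: ffall_Suc)
  also have "real n - real k = real (Suc (n - Suc k))" using Suc.prems by (simp add: of_nat_diff)
  also have "fact n / fact (n - k) * real (Suc (n - Suc k)) = fact n / fact (n - Suc k)"
  proof -
    have "fact (n-k) = real (Suc (n - Suc k)) * (fact (n - Suc k)::real)" unfolding e by (rule fact_Suc)
    thus ?thesis by simp
  qed
  finally show ?case .
qed

lemma Pd_pos: assumes "d \<le> 2*n" shows "Pd d (real n) > 0"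
proof -
  let ?i = "d div 2"
  have a: "ffall (real n) ?i > 0" using ffall_pos[of ?i n] assms by simp
  have b: "ffall (real n) (d - ?i) > 0" using ffall_pos[of "d - ?i" n] assms by simp
  have "tt d (real n) ?i > 0" unfolding tt_def
    by (rule divide_pos_pos) (use a b in auto)
  also have "tt d (real n) ?i \<le> Pd d (real n)" unfolding Pd_tt
    by (rule member_le_sum) (auto intro: tt_nonneg)
  finally show ?thesis .
qed



lemma ibinom_nat: "ibinom (int a) (int b) = (if b \<le> a then int (a choose b) else 0)"
  by (simp add: ibinom_def)

lemma G_term:
  fixes n N k :: nat assumes kn: "k \<le> n" and N: "N \<le> 2*n"
  shows "real_of_int (ibinom (int n) (int k) * ibinom (int n) (int N - int k) * ibinom (int N) (int k)) * fact n ^ 2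
     = fact N * (if n - k \<le> 2*n - N then tt (2*n - N) (real n) (n - k) else 0)"
proof -
  consider (a) "k \<le> N" "N - k \<le> n" | (b) "N < k" | (c) "k \<le> N" "n < N - k" by linarith
  then show ?thesis
  proof cases
    case a
    have e1: "ibinom (int n) (int N - int k) = int (n choose (N - k))"
    proof -
      have h: "int N - int k = int (N-k)" using a by simp
      show ?thesis by (simp only: h ibinom_nat) (simp add: a)
    qed
    have if1: "n - k \<le> 2*n - N" using a by linarith
    have e2: "2*n - N - (n - k) = n - (N - k)" using a N kn by linarith
    have e3: "n - (n - k) = k" using kn by simp
    have f1: "ffall (real n) (n - k) = fact n / fact k" using ffall_fact[of "n-k" n] e3 by simp
    have f2: "ffall (real n) (n - (N - k)) = fact n / fact (N - k)" using ffall_fact[of "n-(N-k)" n] a by simp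
    have "real_of_int (ibinom (int n) (int k) * ibinom (int n) (int N - int k) * ibinom (int N) (int k))
        = real (n choose k) * real (n choose (N - k)) * real (N choose k)"
      using a kn by (simp add: e1 ibinom_nat)
    also have "\<dots> = fact n / (fact k * fact (n - k)) * (fact n / (fact (N-k) * fact (n - (N-k))))
                     * (fact N / (fact k * fact (N - k)))"
      using a kn by (simp add: binomial_fact)
    finally have L: "real_of_int (ibinom (int n) (int k) * ibinom (int n) (int N - int k) * ibinom (int N) (int k))
        = fact n / (fact k * fact (n - k)) * (fact n / (fact (N-k) * fact (n - (N-k))))
                     * (fact N / (fact k * fact (N - k)))" .
    have R: "tt (2*n - N) (real n) (n - k) = (fact n / fact k)^2 * (fact n / fact (N - k))^2 / (fact (n-k) * fact (n - (N - k)))"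
      unfolding tt_def e2 f1 f2 by simp
    show ?thesis unfolding L R using if1 by (simp add: field_simps power2_eq_square)
  next
    case b
    have "ibinom (int N) (int k) = 0" using b by (simp add: ibinom_def)
    moreover have "n - k \<le> 2*n - N \<Longrightarrow> tt (2*n - N) (real n) (n - k) = 0"
      by (rule tt_zero2) (use b kn N in linarith)
    ultimately show ?thesis by simp
  next
    case c
    have "ibinom (int n) (int N - int k) = 0" using c by (simp add: ibinom_def)
    moreover have "\<not> (n - k \<le> 2*n - N)" using c kn N by arith
    ultimately show ?thesis by simp
  qed
qed

lemma G_identity:
  fixes n N :: nat assumes N: "N \<le> 2*n"
  shows "real_of_int (\<Sum>i\<in>{0..int n}. ibinom (int n) i * ibinom (int n) (int N - i) * ibinom (int N) i) * fact n ^ 2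
     = fact N * Pd (2*n - N) (real n)"
proof -
  define d where "d = 2*n - N"
  define h where "h i = (if i \<le> d then tt d (real n) i else 0)" for i
  have s1: "(\<Sum>i\<in>{0..int n}. ibinom (int n) i * ibinom (int n) (int N - i) * ibinom (int N) i)
      = (\<Sum>k\<in>{0..n}. ibinom (int n) (int k) * ibinom (int n) (int N - int k) * ibinom (int N) (int k))"
  proof -
    have "{0..int n} = int ` {0..n}" by (simp add: image_int_atLeastAtMost)
    thus ?thesis by (simp add: sum.reindex)
  qed
  have "Pd d (real n) = (\<Sum>i=0..d. h i)" unfolding Pd_tt h_def by simp
  also have "\<dots> = (\<Sum>i=0..d+n. h i)"
    by (rule sum.mono_neutral_left) (auto simp: h_def)
  also have "\<dots> = (\<Sum>i=0..n. h i)"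
    by (rule sum.mono_neutral_right) (auto simp: h_def tt_zero1)
  also have "\<dots> = (\<Sum>k=0..n. h (n - k))"
    by (subst sum.atLeastAtMost_rev) simp
  finally have P: "Pd d (real n) = (\<Sum>k=0..n. h (n - k))" .
  have "real_of_int (\<Sum>i\<in>{0..int n}. ibinom (int n) i * ibinom (int n) (int N - i) * ibinom (int N) i) * fact n ^ 2
      = (\<Sum>k=0..n. real_of_int (ibinom (int n) (int k) * ibinom (int n) (int N - int k) * ibinom (int N) (int k)) * fact n ^ 2)"
    unfolding s1 by (simp add: sum_distrib_right)
  also have "\<dots> = (\<Sum>k=0..n. fact N * h (n - k))"
    by (rule sum.cong) (use G_term[OF _ N] in \<open>auto simp: h_def d_def\<close>)
  also have "\<dots> = fact N * Pd d (real n)" unfolding P by (simp add: sum_distrib_left)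
  finally show ?thesis unfolding d_def .
qed



lemma ibinom_nonneg: "ibinom a b \<ge> 0" by (simp add: ibinom_def)

lemma fs_nonneg: "fs s1 s2 N \<ge> 0"
  unfolding fs_def by (intro mult_nonneg_nonneg sum_nonneg ibinom_nonneg)

lemma fs_neg: "N < 0 \<Longrightarrow> fs s1 s2 N = 0"
  by (simp add: fs_def ibinom_def)

lemma fs_big: "N > 2*s1 \<Longrightarrow> fs s1 s2 N = 0"
  unfolding fs_def by (rule mult_eq_0_iff[THEN iffD2], rule disjI2, rule sum.neutral) (auto simp: ibinom_def)

lemma nat_binom_rec: "(a choose Suc k) * Suc k = (a choose k) * (a - k)"
  using binomial_absorption[of k a] binomial_absorb_comp[of a k] by (simp add: ac_simps)

lemma ibinom_rec: assumes "N \<ge> 1" shows "ibinom s2 N * N = ibinom s2 (N-1) * (s2 - N + 1)"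
proof (cases "s2 < 0")
  case True thus ?thesis by (simp add: ibinom_def)
next
  case False
  have a0: "s2 = int (nat s2)" using False by simp
  have k0: "N = int (Suc (nat (N-1)))" using assms by simp
  obtain a k where a: "s2 = int a" and k: "N = int (Suc k)" using a0 k0 by blast
  have "int ((a choose Suc k) * Suc k) = int ((a choose k) * (a - k))"
    using nat_binom_rec[of a k] by simp
  hence r: "int (a choose Suc k) * int (Suc k) = int (a choose k) * int (a - k)"
    by (simp only: of_nat_mult)
  show ?thesis
  proof (cases "k \<le> a")
    case True
    have e0: "int (a - k) = s2 - N + 1" using True a k by simp
    have e1: "ibinom s2 N = int (a choose Suc k)" unfolding ibinom_def a k nat_int using True by simp
    have nk: "N - 1 = int k" using k by simp
    have e2: "ibinom s2 (N-1) = int (a choose k)" unfolding ibinom_def a nk nat_int using True by simp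
    show ?thesis unfolding e1 e2 e0[symmetric] using r k by simp
  next
    case False thus ?thesis using a k by (simp add: ibinom_def)
  qed
qed

lemma fs_real:
  fixes n :: nat and k :: nat
  assumes k1: "1 \<le> k" and k2: "k \<le> 2*n"
  shows "real_of_int (fs (int n) s2 (int k)) * real k * fact n ^ 2
           = real_of_int (ibinom s2 (int k - 1)) * (real_of_int s2 - real k + 1) * (fact k * Pd (2*n - k) (real n))"
    and "real_of_int (fs (int n) s2 (int k - 1)) * real k * fact n ^ 2
           = real_of_int (ibinom s2 (int k - 1)) * (fact k * Pd (Suc (2*n - k)) (real n))"
proof -
  let ?G = "\<lambda>N::nat. (\<Sum>i\<in>{0..int n}. ibinom (int n) i * ibinom (int n) (int N - i) * ibinom (int N) i)"
  have G1: "real_of_int (?G k) * fact n ^ 2 = fact k * Pd (2*n - k) (real n)"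
    by (rule G_identity) (use k2 in simp)
  have G2: "real_of_int (?G (k-1)) * fact n ^ 2 = fact (k-1) * Pd (2*n - (k-1)) (real n)"
    by (rule G_identity) (use k2 in simp)
  have e: "2*n - (k-1) = Suc (2*n - k)" using k1 k2 by simp
  have fk: "fact k = real k * (fact (k-1) :: real)" using k1 by (simp add: fact_reduce)
  have ik: "int (k-1) = int k - 1" using k1 by simp
  have rec: "real_of_int (ibinom s2 (int k)) * real k = real_of_int (ibinom s2 (int k - 1)) * (real_of_int s2 - real k + 1)"
  proof -
    have "ibinom s2 (int k) * int k = ibinom s2 (int k - 1) * (s2 - int k + 1)"
      using ibinom_rec[of "int k" s2] k1 by simp
    hence "real_of_int (ibinom s2 (int k) * int k) = real_of_int (ibinom s2 (int k - 1) * (s2 - int k + 1))"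
      by simp
    thus ?thesis by simp
  qed
  have fs1: "fs (int n) s2 (int k) = ibinom s2 (int k) * ?G k" by (simp add: fs_def)
  have fs2: "fs (int n) s2 (int k - 1) = ibinom s2 (int k - 1) * ?G (k-1)" by (simp only: fs_def ik)
  show "real_of_int (fs (int n) s2 (int k)) * real k * fact n ^ 2
           = real_of_int (ibinom s2 (int k - 1)) * (real_of_int s2 - real k + 1) * (fact k * Pd (2*n - k) (real n))"
  proof -
    have "real_of_int (fs (int n) s2 (int k)) * real k * fact n ^ 2
        = (real_of_int (ibinom s2 (int k)) * real k) * (real_of_int (?G k) * fact n ^ 2)"
      unfolding fs1 by (simp add: ac_simps)
    thus ?thesis unfolding rec G1 .
  qed
  show "real_of_int (fs (int n) s2 (int k - 1)) * real k * fact n ^ 2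
           = real_of_int (ibinom s2 (int k - 1)) * (fact k * Pd (Suc (2*n - k)) (real n))"
  proof -
    have "real_of_int (fs (int n) s2 (int k - 1)) * real k * fact n ^ 2
        = real_of_int (ibinom s2 (int k - 1)) * real k * (real_of_int (?G (k-1)) * fact n ^ 2)"
      unfolding fs2 by (simp add: ac_simps)
    also have "\<dots> = real_of_int (ibinom s2 (int k - 1)) * (fact k * Pd (Suc (2*n - k)) (real n))"
      unfolding G2 e fk by (simp add: ac_simps)
    finally show ?thesis .
  qed
qed



lemma Pd_nonneg: "Pd d x \<ge> 0"
  unfolding Pd_tt by (rule sum_nonneg) (rule tt_nonneg)

lemma Dec_P:
  fixes n d0 d :: nat and y :: real
  assumes pos: "0 < 2/(real d0 + 1)*(real n^2 + real n) - (real d0 + 2)/2 - y"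
    and dd: "d + 1 \<le> d0" and d0n: "d0 \<le> 2*n"
  shows "(y - 2*real n + real d + 1) * Pd d (real n) \<le> Pd (Suc d) (real n)"
proof -
  define x where "x = real n"
  define e where "e = real d"
  have e0: "e \<ge> 0" unfolding e_def by simp
  have ed0: "e + 2 \<le> real d0 + 1" using dd unfolding e_def by simp
  have ex: "e \<le> 2*x" using dd d0n unfolding e_def x_def by simp
  have xx: "x^2 + x \<ge> 0" unfolding x_def by simp
  have x0: "x \<ge> 0" unfolding x_def by simp
  have q1: "2*(x^2+x)/(real d0 + 1) \<le> 2*(x^2+x)/(e+2)"
    by (rule divide_left_mono) (use xx ed0 e0 in auto)
  have pos': "y < 2*(x^2+x)/(real d0+1) - (real d0+2)/2" using pos unfolding x_def by (simp only: times_divide_eq_left times_divide_eq_right mult.commute)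
  have h1: "y < 2*(x^2+x)/(e+2) - (e+3)/2"
  proof -
    have "(e+3)/2 \<le> (real d0+2)/2" using ed0 by simp
    thus ?thesis using pos' q1 by linarith
  qed
  have h2: "2*(e+2)*y < 4*(x^2+x) - (e+2)*(e+3)"
  proof -
    have "2*(e+2)*y < 2*(e+2)*(2*(x^2+x)/(e+2) - (e+3)/2)"
      using h1 e0 by simp
    also have "\<dots> = 4*(x^2+x) - (e+2)*(e+3)" using e0 by (simp add: field_simps)
    finally show ?thesis .
  qed
  have id: "(2*x-e)^2 - (y-2*x+e+1)*(2*(e+2)) = (4*(x^2+x) - (e+2)*(e+3) - 2*(e+2)*y) + (4*x - e + 2)"
    by (simp add: algebra_simps power2_eq_square)
  have C: "0 < 4*(x^2+x) - (e+2)*(e+3) - 2*(e+2)*y" using h2 by linarith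
  have "0 \<le> (2*x-e)^2 - (y-2*x+e+1)*(2*(e+2))" unfolding id using C ex x0 by linarith
  hence "(y-2*x+e+1)*(2*(e+2)) \<le> (2*x-e)^2" by linarith
  hence k: "y-2*x+e+1 \<le> (2*x-e)^2/(2*(e+2))" using e0 by (simp add: pos_le_divide_eq)
  have "(y - 2*real n + real d + 1) * Pd d (real n) \<le> (2*x-e)^2/(2*(e+2)) * Pd d (real n)"
    by (rule mult_right_mono) (use k Pd_nonneg in \<open>auto simp: x_def e_def\<close>)
  also have "\<dots> \<le> Pd (Suc d) (real n)" using Pd_LB[where d=d and x="real n"] unfolding x_def e_def by simp
  finally show ?thesis .
qed

lemma small_int:
  fixes N d :: nat and s2 :: int
  assumes N1: "N \<ge> 1" and Nd: "N*N < d+2" and s2: "s2^2 + s2 \<ge> int N + int d + 3" and s20: "s2 \<ge> 0" and d1: "d \<ge> 5"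
  shows "(int N+1)^2 \<le> (int d+1)*(s2 - int N + 1)"
proof -
  have sN: "s2 \<ge> int N + 1"
  proof (rule ccontr)
    assume "\<not> ?thesis"
    hence "s2 \<le> int N" by simp
    hence "s2*s2 \<le> int N * int N" using s20 by (simp add: mult_mono)
    moreover have "int N * int N < int d + 2" proof -
      have "int (N*N) < int (d+2)" using Nd by (simp only: of_nat_less_iff)
      thus ?thesis by simp
    qed
    ultimately show False using s2 \<open>s2 \<le> int N\<close> by (simp add: power2_eq_square)
  qed
  have a: "(int N+1)^2 \<le> 2*(int d+1)"
  proof (cases "N \<le> 2")
    case True
    hence "N = 1 \<or> N = 2" using N1 by linarith
    thus ?thesis using d1 by auto
  next
    case False
    hence "N \<ge> 3" by simp
    hence "3*N \<le> N*N" by simp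
    hence "int (3*N) \<le> int (N*N)" by (simp only: of_nat_le_iff)
    hence "3*int N \<le> int N * int N" by simp
    moreover have "int N \<ge> 3" using \<open>N \<ge> 3\<close> by simp
    moreover have "int N * int N \<le> int d + 1" proof -
      have "N*N \<le> d+1" using Nd by simp
      hence "int (N*N) \<le> int (d+1)" by (simp only: of_nat_le_iff)
      thus ?thesis by simp
    qed
    moreover have p: "(int N + 1)^2 = int N * int N + 2*int N + 1" by (simp add: power2_eq_square algebra_simps)
    moreover have "int d \<ge> 5" using d1 by simp
    ultimately show ?thesis unfolding p by (smt (verit))
  qed
  have "2*(int d+1) \<le> (int d+1)*(s2 - int N + 1)"
  proof -
    have "2 \<le> s2 - int N + 1" using sN by simp
    from mult_left_mono[OF this, of "int d + 1"] show ?thesis by (simp add: mult.commute)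
  qed
  thus ?thesis using a by linarith
qed

lemma cancel_aux1: "(e::real) + 1 \<noteq> 0 \<Longrightarrow> 2/(e+1)*X * (2*(e+1)) = 4*X"
  by (simp add: field_simps)
lemma cancel_aux2: "(e::real) + 1 \<noteq> 0 \<Longrightarrow> 2*e/(e+1)*X * (2*(e+1)) = 4*e*X"
  by (simp add: field_simps)

lemma q_minus_m: fixes x y e :: real assumes "e \<ge> 0"
  shows "(2 / (e + 1) * x^2 - 2 * e / (e + 1) * x + e / 2) - (y - 2*x + e + 1)
       = (4*(x^2+x) - (e+1)*(e+2+2*y)) / (2*(e+1))"
proof -
  have h: "e + 1 \<noteq> 0" using assms by linarith
  have a1: "2/(e+1)*x^2 * (2*(e+1)) = 4*x^2" using h by (rule cancel_aux1)
  have a2: "2*e/(e+1)*x * (2*(e+1)) = 4*e*x" using h by (rule cancel_aux2)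
  have "((2 / (e + 1) * x^2 - 2 * e / (e + 1) * x + e / 2) - (y - 2*x + e + 1)) * (2*(e+1))
      = 2/(e+1)*x^2 * (2*(e+1)) - 2*e/(e+1)*x * (2*(e+1)) + (e/2 - y + 2*x - e - 1)*(2*(e+1))"
    by (simp add: algebra_simps)
  also have "\<dots> = 4*(x^2+x) - (e+1)*(e+2+2*y)" unfolding a1 a2 by (simp add: algebra_simps)
  finally show ?thesis using h by (simp add: eq_divide_eq)
qed

lemma A_alt: fixes x y e :: real assumes "e \<ge> 0"
  shows "2/(e+1)*(x^2+x) - (e+2)/2 - y = (4*(x^2+x) - (e+1)*(e+2+2*y)) / (2*(e+1))"
proof -
  have h: "e + 1 \<noteq> 0" using assms by linarith
  have a1: "2/(e+1)*(x^2+x) * (2*(e+1)) = 4*(x^2+x)" using h by (rule cancel_aux1)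
  have "(2/(e+1)*(x^2+x) - (e+2)/2 - y) * (2*(e+1)) = 2/(e+1)*(x^2+x) * (2*(e+1)) - ((e+2)/2 + y)*(2*(e+1))"
    by (simp add: algebra_simps)
  also have "\<dots> = 4*(x^2+x) - (e+1)*(e+2+2*y)" unfolding a1 by (simp add: algebra_simps)
  finally show ?thesis using h by (simp add: eq_divide_eq)
qed

lemma Inc_P:
  fixes n d0 d :: nat and s2 :: int
  assumes conj: "\<forall>(d::nat) (x::real). d \<ge> 5 \<and> x \<ge> (real d + sqrt (real d + 2)) / 2 \<longrightarrow>
                   - Rd d x / Pd d x \<ge> 0.995 * (real d - 2) / (2 * x + real d - 2)"
    and upper0: "2/(real d0 + 1)*(real n^2 + real n) - (real d0 + 2)/2 - real_of_int s2
                  \<le> 0.995*(real d0 - 2)/(2*real n + real d0 - 2)"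
    and Aneg: "\<And>d::nat. d \<ge> d0 + 1 \<Longrightarrow> 4*(real n^2 + real n) < (real d + 1)*(real d + 2 + 2*real_of_int s2)"
    and d05: "d0 \<ge> 5" and dd: "d0 \<le> d" and dn: "d < 2*n"
    and s2sq: "s2^2 + s2 \<ge> 2*int n + 3" and s20: "s2 \<ge> 0"
  shows "Pd (Suc d) (real n) \<le> (real_of_int s2 - 2*real n + real d + 1) * Pd d (real n)"
proof -
  define x where "x = real n"
  define y where "y = real_of_int s2"
  define e where "e = real d"
  define m where "m = y - 2*x + e + 1"
  define q where "q = 2 / (e + 1) * x^2 - 2 * e / (e + 1) * x + e / 2"
  have e5: "e \<ge> 5" using dd d05 unfolding e_def by simp
  have P: "Pd d x > 0" unfolding x_def by (rule Pd_pos) (use dn in simp)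
  have qm: "q - m = (4*(x^2+x) - (e+1)*(e+2+2*y)) / (2*(e+1))"
    unfolding q_def m_def by (rule q_minus_m) (use e5 in simp)
  have goal: "Pd (Suc d) x \<le> m * Pd d x"
  proof (cases "(e + sqrt (e + 2)) / 2 \<le> x")
    case True
    define c where "c = 0.995 * (e - 2) / (2 * x + e - 2)"
    have "c \<le> - Rd d x / Pd d x" using conj True d05 dd unfolding c_def e_def by auto
    hence "c \<le> (- Rd d x) / Pd d x" by simp
    hence cP: "c * Pd d x \<le> - Rd d x" using pos_le_divide_eq[OF P] by blast
    have R: "Rd d x = Pd (Suc d) x - q * Pd d x" unfolding Rd_def q_def e_def by simp
    have c0: "c \<ge> 0" unfolding c_def using e5 x_def by simp
    have qc: "q - c \<le> m"
    proof (cases "d = d0")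
      case True
      have "q - m \<le> c"
      proof -
        have "q - m = 2/(real d0 + 1)*(real n^2 + real n) - (real d0 + 2)/2 - real_of_int s2"
          unfolding qm A_alt[where e="real d0", OF of_nat_0_le_iff] unfolding e_def x_def y_def True ..
        thus ?thesis using upper0 unfolding c_def e_def x_def True by simp
      qed
      thus ?thesis by simp
    next
      case False
      hence "d \<ge> d0 + 1" using dd by simp
      from Aneg[OF this] have "4*(x^2+x) - (e+1)*(e+2+2*y) < 0" unfolding x_def e_def y_def by simp
      hence "q - m < 0" unfolding qm using e5 by (simp add: divide_neg_pos)
      thus ?thesis using c0 by simp
    qed
    have "Pd (Suc d) x \<le> (q - c) * Pd d x" using cP R by (simp add: algebra_simps)
    also have "\<dots> \<le> m * Pd d x" using qc P by (simp add: mult_right_mono)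
    finally show ?thesis .
  next
    case False
    define N where "N = 2*n - d"
    have rN: "real N = 2*x - e" unfolding N_def x_def e_def using dn by (simp add: of_nat_diff)
    have N1: "N \<ge> 1" unfolding N_def using dn by simp
    have "real N < sqrt (e + 2)" using False rN by simp
    hence "real N ^2 < sqrt (e+2) ^2" by (rule power_strict_mono) auto
    hence "real N ^2 < e + 2" using e5 by simp
    hence "real (N*N) < real (d+2)" unfolding e_def by (simp add: power2_eq_square)
    hence NN: "N*N < d+2" by (simp only: of_nat_less_iff)
    have "s2^2 + s2 \<ge> int N + int d + 3" using s2sq dn unfolding N_def by simp
    from small_int[OF N1 NN this s20] dd d05
    have "(int N+1)^2 \<le> (int d+1)*(s2 - int N + 1)" by simp
    hence "real_of_int ((int N+1)^2) \<le> real_of_int ((int d+1)*(s2 - int N + 1))" by (simp only: of_int_le_iff)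
    hence ineq: "(real N + 1)^2 \<le> (e+1)*(y - real N + 1)" unfolding e_def y_def by simp
    have "Pd (Suc d) x \<le> (2*x - e + 1)^2 / (e + 1) * Pd d x"
      using Pd_UB[where d=d and n=n] unfolding x_def e_def .
    also have "(2*x - e + 1)^2 / (e + 1) \<le> m"
    proof -
      have r1: "2*x - e + 1 = real N + 1" using rN by simp
      have r2: "m = y - real N + 1" using rN unfolding m_def by simp
      have "(2*x - e + 1)^2 \<le> m * (e+1)" unfolding r1 r2 using ineq by (simp add: mult.commute)
      thus ?thesis using e5 by (simp add: pos_divide_le_eq)
    qed
    hence "(2*x - e + 1)^2 / (e + 1) * Pd d x \<le> m * Pd d x" using P by (intro mult_right_mono) auto
    finally show ?thesis .
  qed
  thus ?thesis unfolding m_def x_def y_def e_def .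
qed



theorem theorem3p2:
  fixes s1 s2 :: int
  assumes conj: "\<forall>(d::nat) (x::real). d \<ge> 5 \<and> x \<ge> (real d + sqrt (real d + 2)) / 2 \<longrightarrow>
                   - Rd d x / Pd d x \<ge> 0.995 * (real d - 2) / (2 * x + real d - 2)"
    and s1: "s1 \<ge> 1"
    and s2: "real_of_int s2 > (sqrt (8 * real_of_int s1 + 9) - 1) / 2"
    and d0_ge: "\<lfloor>sqrt (4 * real_of_int s1 ^ 2 + 4 * real_of_int s1 + (real_of_int s2 + 1/2)^2)
                  - real_of_int s2 - 3/2\<rfloor> \<ge> 5"
    and pos: "0 < 2 / (real_of_int \<lfloor>sqrt (4 * real_of_int s1 ^ 2 + 4 * real_of_int s1 + (real_of_int s2 + 1/2)^2)
                  - real_of_int s2 - 3/2\<rfloor> + 1) * (real_of_int s1 ^ 2 + real_of_int s1)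
               - (real_of_int \<lfloor>sqrt (4 * real_of_int s1 ^ 2 + 4 * real_of_int s1 + (real_of_int s2 + 1/2)^2)
                  - real_of_int s2 - 3/2\<rfloor> + 2) / 2 - real_of_int s2"
    and upper: "2 / (real_of_int \<lfloor>sqrt (4 * real_of_int s1 ^ 2 + 4 * real_of_int s1 + (real_of_int s2 + 1/2)^2)
                  - real_of_int s2 - 3/2\<rfloor> + 1) * (real_of_int s1 ^ 2 + real_of_int s1)
               - (real_of_int \<lfloor>sqrt (4 * real_of_int s1 ^ 2 + 4 * real_of_int s1 + (real_of_int s2 + 1/2)^2)
                  - real_of_int s2 - 3/2\<rfloor> + 2) / 2 - real_of_int s2
             \<le> 0.995 * (real_of_int \<lfloor>sqrt (4 * real_of_int s1 ^ 2 + 4 * real_of_int s1 + (real_of_int s2 + 1/2)^2)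
                  - real_of_int s2 - 3/2\<rfloor> - 2)
               / (2 * real_of_int s1 + real_of_int \<lfloor>sqrt (4 * real_of_int s1 ^ 2 + 4 * real_of_int s1 + (real_of_int s2 + 1/2)^2)
                  - real_of_int s2 - 3/2\<rfloor> - 2)"
  shows "\<forall>M::int. fs s1 s2 M \<le> fs s1 s2
           (\<lfloor>2 * real_of_int s1 + real_of_int s2 + 3/2
              - sqrt (4 * real_of_int s1 ^ 2 + 4 * real_of_int s1 + (real_of_int s2 + 1/2)^2)\<rfloor> + 1)"

proof -
  define x where "x = real_of_int s1"
  define y where "y = real_of_int s2"
  define Q where "Q = 4 * real_of_int s1 ^ 2 + 4 * real_of_int s1 + (real_of_int s2 + 1/2)^2"
  define S where "S = sqrt Q"
  define d0i where "d0i = \<lfloor>sqrt (4 * real_of_int s1 ^ 2 + 4 * real_of_int s1 + (real_of_int s2 + 1/2)^2)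
                  - real_of_int s2 - 3/2\<rfloor>"
  have d0S: "d0i = \<lfloor>S - y - 3/2\<rfloor>" unfolding d0i_def S_def Q_def y_def ..
  note pos' = pos[folded d0i_def]
  note upper' = upper[folded d0i_def]
  note d0_ge' = d0_ge[folded d0i_def]
  obtain n where n: "s1 = int n" using s1 by (intro that[of "nat s1"]) simp
  obtain d0 where d0: "d0i = int d0" using d0_ge' by (intro that[of "nat d0i"]) simp
  have d05: "d0 \<ge> 5" using d0_ge' d0 by simp
  have xn: "x = real n" unfolding x_def n by simp
  have n1: "n \<ge> 1" using s1 n by simp
  have x1: "x \<ge> 1" using n1 xn by simp
  have sq3: "sqrt (8 * real_of_int s1 + 9) \<ge> 3"
  proof -
    have "sqrt 9 \<le> sqrt (8 * real_of_int s1 + 9)" using x1 unfolding x_def by (subst real_sqrt_le_iff) simp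
    moreover have "sqrt (9::real) = 3" by (rule real_sqrt_unique) auto
    ultimately show ?thesis by simp
  qed
  have "(sqrt (8 * real_of_int s1 + 9) - 1) / 2 \<ge> 1" using sq3 by simp
  hence y1: "y > 1" using s2 unfolding y_def by linarith
  have s20: "s2 \<ge> 0" using y1 unfolding y_def by simp
  have y0: "y \<ge> 0" using y1 by simp
  have "(2*y+1)^2 > sqrt (8 * real_of_int s1 + 9)^2"
    by (rule power_strict_mono) (use s2 sq3 s1 in \<open>auto simp: y_def\<close>)
  also have "sqrt (8 * real_of_int s1 + 9)^2 = 8 * real_of_int s1 + 9" using x1 unfolding x_def by simp
  finally have "4*y^2 + 4*y + 1 > 8 * real_of_int s1 + 9" by (simp add: power2_eq_square algebra_simps)
  hence "real_of_int (s2^2 + s2) > real_of_int (2*s1 + 2)" unfolding y_def by simp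
  hence "s2^2 + s2 > 2*s1 + 2" by (simp only: of_int_less_iff)
  hence s2sq: "s2^2 + s2 \<ge> 2*int n + 3" using n by simp
  have Q0: "Q \<ge> 0" unfolding Q_def using s1 by (intro add_nonneg_nonneg) auto
  have S0: "S \<ge> 0" unfolding S_def using Q0 by simp
  have SQ: "S^2 = Q" unfolding S_def using Q0 by simp
  have Qx: "Q = 4*x^2 + 4*x + (y+1/2)^2" unfolding Q_def x_def y_def by simp
  have fl1: "real d0 \<le> S - y - 3/2" using d0S d0 by (metis of_int_floor_le of_int_of_nat_eq)
  have fl2: "S - y - 3/2 < real d0 + 1" using d0S d0 by (metis of_int_of_nat_eq real_of_int_floor_add_one_gt)
  have posA: "0 < 2/(real d0 + 1)*(x^2 + x) - (real d0 + 2)/2 - y"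
    using pos' unfolding d0 x_def y_def by simp
  have upper0: "2/(real d0 + 1)*(real n^2 + real n) - (real d0 + 2)/2 - real_of_int s2
                  \<le> 0.995*(real d0 - 2)/(2*real n + real d0 - 2)"
    using upper' unfolding d0 n by simp
  have d0n: "d0 < 2*n"
  proof -
    have df: "(2*x + y + 3/2)^2 - Q = 2 + 2*x + 2*y + 4*(x*y)" unfolding Qx by (simp add: power2_eq_square algebra_simps)
    have "x*y \<ge> 0" using x1 y0 by simp
    hence "Q < (2*x + y + 3/2)^2" using df x1 y0 by linarith
    hence "sqrt Q < sqrt ((2*x + y + 3/2)^2)" by (rule real_sqrt_less_mono)
    also have "\<dots> = 2*x + y + 3/2" using x1 y0 by simp
    finally have "S < 2*x + y + 3/2" unfolding S_def .
    hence "real d0 < 2 * real n" using fl1 xn by simp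
    thus ?thesis by linarith
  qed
  have Aneg: "4*(real n^2 + real n) < (real d + 1)*(real d + 2 + 2*real_of_int s2)" if dd: "d \<ge> d0 + 1" for d :: nat
  proof -
    have "real d \<ge> real d0 + 1" using dd by simp
    hence lt: "S < real d + y + 3/2" using fl2 by simp
    have "S^2 < (real d + y + 3/2)^2" by (rule power_strict_mono) (use lt S0 in auto)
    hence "4*x^2 + 4*x + (y+1/2)^2 < (real d + y + 3/2)^2" using SQ Qx by simp
    thus ?thesis unfolding xn y_def[symmetric] by (simp add: power2_eq_square algebra_simps)
  qed
  have fl3: "real d0 < S - y - 3/2"
  proof (rule ccontr)
    assume "\<not> ?thesis"
    hence eqS: "S = real d0 + y + 3/2" using fl1 by simp
    hence "Q = (real d0 + y + 3/2)^2" using SQ by simp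
    hence "4*(x^2+x) - (real d0 + 1)*(real d0 + 2 + 2*y) = 0" unfolding Qx by (simp add: power2_eq_square algebra_simps)
    moreover have "2/(real d0 + 1)*(x^2 + x) - (real d0 + 2)/2 - y = (4*(x^2+x) - (real d0 + 1)*(real d0 + 2 + 2*y)) / (2*(real d0 + 1))"
      by (rule A_alt) simp
    ultimately have "2/(real d0 + 1)*(x^2 + x) - (real d0 + 2)/2 - y = 0" by simp
    thus False using posA by simp
  qed
  have N0eq: "\<lfloor>2 * real_of_int s1 + real_of_int s2 + 3/2
              - sqrt (4 * real_of_int s1 ^ 2 + 4 * real_of_int s1 + (real_of_int s2 + 1/2)^2)\<rfloor> + 1 = 2*s1 - d0i"
  proof -
    have "\<lfloor>2 * x + y + 3/2 - S\<rfloor> = 2*s1 - d0i - 1"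
      unfolding floor_eq_iff using fl2 fl3 d0 x_def by simp
    thus ?thesis unfolding x_def y_def S_def Q_def by simp
  qed
  have Inc: "fs s1 s2 (N-1) \<le> fs s1 s2 N" if N1: "1 \<le> N" and N2: "N \<le> 2*s1 - d0i" for N
  proof -
    obtain k where k: "N = int k" using N1 by (intro that[of "nat N"]) simp
    have k1: "1 \<le> k" using N1 k by simp
    have k2: "k \<le> 2*n" using N2 k n d0 by simp
    define d where "d = 2*n - k"
    have dd: "d0 \<le> d" using N2 k n d0 unfolding d_def by simp
    have dn: "d < 2*n" using k1 k2 unfolding d_def by simp
    have P: "Pd (Suc d) (real n) \<le> (real_of_int s2 - 2*real n + real d + 1) * Pd d (real n)"
      by (rule Inc_P[OF conj upper0 Aneg d05 dd dn s2sq s20])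
    have rd: "real d = 2*real n - real k" unfolding d_def using k2 by (simp add: of_nat_diff)
    define B where "B = real_of_int (ibinom s2 (int k - 1))"
    have B0: "B \<ge> 0" unfolding B_def using ibinom_nonneg by simp
    have fk: "(fact k :: real) > 0" by simp
    have e1: "real_of_int (fs s1 s2 N) * real k * fact n ^ 2 = B * (real_of_int s2 - real k + 1) * (fact k * Pd d (real n))"
      unfolding B_def d_def n k by (rule fs_real(1)[OF k1 k2])
    have e2: "real_of_int (fs s1 s2 (N-1)) * real k * fact n ^ 2 = B * (fact k * Pd (Suc d) (real n))"
      unfolding B_def d_def n k by (rule fs_real(2)[OF k1 k2])
    have P': "Pd (Suc d) (real n) \<le> (real_of_int s2 - real k + 1) * Pd d (real n)"
      using P unfolding rd by simp
    have "B * (fact k * Pd (Suc d) (real n)) \<le> B * (fact k * ((real_of_int s2 - real k + 1) * Pd d (real n)))"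
      by (intro mult_left_mono P') (use B0 in auto)
    hence "real_of_int (fs s1 s2 (N-1)) * (real k * fact n ^ 2) \<le> real_of_int (fs s1 s2 N) * (real k * fact n ^ 2)"
      using e1 e2 by (simp add: ac_simps)
    moreover have "real k * fact n ^ 2 > 0" using k1 by simp
    ultimately have "real_of_int (fs s1 s2 (N-1)) \<le> real_of_int (fs s1 s2 N)" by (simp only: mult_le_cancel_right_pos)
    thus ?thesis by simp
  qed
  have Dec: "fs s1 s2 N \<le> fs s1 s2 (N-1)" if N1: "2*s1 - d0i + 1 \<le> N" for N
  proof (cases "N > 2*s1")
    case True thus ?thesis using fs_big fs_nonneg by simp
  next
    case False
    have Nge: "N \<ge> 1" using N1 d0n n d0 by linarith
    obtain k where k: "N = int k" using Nge by (intro that[of "nat N"]) simp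
    have k1: "1 \<le> k" using Nge k by simp
    have k2: "k \<le> 2*n" using False k n by simp
    define d where "d = 2*n - k"
    have dd: "d + 1 \<le> d0" using N1 k n d0 k2 d0n unfolding d_def by simp
    have posA': "0 < 2/(real d0 + 1)*(real n^2 + real n) - (real d0 + 2)/2 - y" using posA xn by simp
    have P: "(y - 2*real n + real d + 1) * Pd d (real n) \<le> Pd (Suc d) (real n)"
      by (rule Dec_P[OF posA' dd]) (use d0n in simp)
    have rd: "real d = 2*real n - real k" unfolding d_def using k2 by (simp add: of_nat_diff)
    define B where "B = real_of_int (ibinom s2 (int k - 1))"
    have B0: "B \<ge> 0" unfolding B_def using ibinom_nonneg by simp
    have e1: "real_of_int (fs s1 s2 N) * real k * fact n ^ 2 = B * (real_of_int s2 - real k + 1) * (fact k * Pd d (real n))"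
      unfolding B_def d_def n k by (rule fs_real(1)[OF k1 k2])
    have e2: "real_of_int (fs s1 s2 (N-1)) * real k * fact n ^ 2 = B * (fact k * Pd (Suc d) (real n))"
      unfolding B_def d_def n k by (rule fs_real(2)[OF k1 k2])
    have P': "(real_of_int s2 - real k + 1) * Pd d (real n) \<le> Pd (Suc d) (real n)"
      using P unfolding rd y_def by simp
    have "B * (fact k * ((real_of_int s2 - real k + 1) * Pd d (real n))) \<le> B * (fact k * Pd (Suc d) (real n))"
      by (intro mult_left_mono P') (use B0 in auto)
    hence "real_of_int (fs s1 s2 N) * (real k * fact n ^ 2) \<le> real_of_int (fs s1 s2 (N-1)) * (real k * fact n ^ 2)"
      using e1 e2 by (simp add: ac_simps)
    moreover have "real k * fact n ^ 2 > 0" using k1 by simp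
    ultimately have "real_of_int (fs s1 s2 N) \<le> real_of_int (fs s1 s2 (N-1))" by (simp only: mult_le_cancel_right_pos)
    thus ?thesis by simp
  qed
  define N0 where "N0 = 2*s1 - d0i"
  have up: "fs s1 s2 (N0 - int j) \<le> fs s1 s2 N0" for j :: nat
  proof (induction j)
    case 0 thus ?case by simp
  next
    case (Suc j)
    show ?case
    proof (cases "1 \<le> N0 - int j")
      case True
      have "fs s1 s2 (N0 - int j - 1) \<le> fs s1 s2 (N0 - int j)"
        by (rule Inc) (use True N0_def in auto)
      thus ?thesis using Suc.IH by (simp add: algebra_simps)
    next
      case False
      hence "fs s1 s2 (N0 - int (Suc j)) = 0" by (intro fs_neg) simp
      thus ?thesis using fs_nonneg by simp
    qed
  qed
  have down: "fs s1 s2 (N0 + int j) \<le> fs s1 s2 N0" for j :: nat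
  proof (induction j)
    case 0 thus ?case by simp
  next
    case (Suc j)
    have "fs s1 s2 (N0 + int j + 1) \<le> fs s1 s2 (N0 + int j + 1 - 1)"
      by (rule Dec) (simp add: N0_def)
    thus ?case using Suc.IH by (simp add: algebra_simps)
  qed
  show ?thesis
  proof
    fix M :: int
    have "fs s1 s2 M \<le> fs s1 s2 N0"
    proof (cases "M \<le> N0")
      case True
      have "M = N0 - int (nat (N0 - M))" using True by simp
      thus ?thesis using up by metis
    next
      case False
      have "M = N0 + int (nat (M - N0))" using False by simp
      thus ?thesis using down by metis
    qed
    thus "fs s1 s2 M \<le> fs s1 s2 (\<lfloor>2 * real_of_int s1 + real_of_int s2 + 3/2
              - sqrt (4 * real_of_int s1 ^ 2 + 4 * real_of_int s1 + (real_of_int s2 + 1/2)^2)\<rfloor> + 1)"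
      unfolding N0eq N0_def .
  qed
qed


end
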